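(* Fix a sequence of matchings and any non-negative load vector $x^{(t_1)}$ at the end of round $t_1$, and let $\mathcal{T}$ be the set of all tokens. Let $D\subseteq V$ and $t_2 > t_1$. Then the random variable $Z:= \sum_{i \in \mathcal{T}} \mathbf{1}_{w_i^{(t_2)} \in D} = \sum_{u \in D} x_u^{(t_2)}$ satisfies, for any $\delta > 0$, \[ \Pr[ Z \geq (1+\delta) \mathbb{E}[Z] ] \leq \left( \frac{\mathrm{e}^{\delta}}{(1+\delta)^{1+\delta}} \right)^{\mathbb{E}[Z]}. \]
   Context: Token-based description of the discrete load balancing protocol on a graph $G=(V,E)$ with matchings $\mathbf{M}^{(t)}\subseteq E$ used in round $t$: tokens are distinguishable; $w^{(t)}_i$ is the node holding token $i$ at the end of round $t$, $x^{(t)}_u$ the number of tokens at $u$. If $u,v$ are matched in round $t$, all tokens at $u$ and $v$ are put in an urn; with probability $1/2$ node $u$ draws $\lceil (x^{(t-1)}_u+x^{(t-1)}_v)/2\rceil$ tokens uniformly at random without replacement, otherwise $\lfloor (x^{(t-1)}_u+x^{(t-1)}_v)/2\rfloor$ (independently over matched edges and rounds); $v$ gets the rest. Unmatched nodes keep their tokens. *)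

theory Defs
  imports "HOL-Probability.Probability"
begin

text \<open>A matching used in a round is a set of ordered pairs (u,v) of distinct
  nodes; the first component is the node that flips the coin for drawing the
  ceiling (with probability 1/2).\<close>

definition is_matching :: "'v set \<Rightarrow> 'v set set \<Rightarrow> ('v \<times> 'v) set \<Rightarrow> bool" where
  "is_matching V E M \<longleftrightarrow> finite M \<and>
     (\<forall>(u,v)\<in>M. u \<noteq> v \<and> u \<in> V \<and> v \<in> V \<and> {u,v} \<in> E) \<and>
     (\<forall>e\<in>M. \<forall>e'\<in>M. e \<noteq> e' \<longrightarrow> {fst e, snd e} \<inter> {fst e', snd e'} = {})"

definition edge_draw :: "'t set \<Rightarrow> ('t \<Rightarrow> 'v) \<Rightarrow> 'v \<times> 'v \<Rightarrow> 't set pmf" where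
  "edge_draw Tok w e =
     bind_pmf (bernoulli_pmf (1/2)) (\<lambda>b.
       let S = {i \<in> Tok. w i = fst e \<or> w i = snd e};
           k = (if b then (card S + 1) div 2 else card S div 2)
       in pmf_of_set {A. A \<subseteq> S \<and> card A = k})"

definition new_pos :: "('v \<times> 'v) set \<Rightarrow> ('t \<Rightarrow> 'v) \<Rightarrow> ('v \<times> 'v \<Rightarrow> 't set) \<Rightarrow> 't \<Rightarrow> 'v" where
  "new_pos M w C i =
     (if \<exists>e\<in>M. w i = fst e \<or> w i = snd e then
        (let e = (SOME e. e \<in> M \<and> (w i = fst e \<or> w i = snd e))
         in if i \<in> C e then fst e else snd e)
      else w i)"

definition round_step :: "'t set \<Rightarrow> ('v \<times> 'v) set \<Rightarrow> ('t \<Rightarrow> 'v) \<Rightarrow> ('t \<Rightarrow> 'v) pmf" where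
  "round_step Tok M w = map_pmf (new_pos M w) (Pi_pmf M {} (edge_draw Tok w))"

text \<open>Token positions after n further rounds starting at the end of round t1,
  round t using matching Ms t.\<close>
fun run :: "'t set \<Rightarrow> (nat \<Rightarrow> ('v \<times> 'v) set) \<Rightarrow> nat \<Rightarrow> ('t \<Rightarrow> 'v) \<Rightarrow> nat \<Rightarrow> ('t \<Rightarrow> 'v) pmf" where
  "run Tok Ms t1 w0 0 = return_pmf w0"
| "run Tok Ms t1 w0 (Suc n) = bind_pmf (run Tok Ms t1 w0 n) (round_step Tok (Ms (t1 + Suc n)))"

definition load :: "'t set \<Rightarrow> ('t \<Rightarrow> 'v) \<Rightarrow> 'v \<Rightarrow> nat" where
  "load Tok w u = card {i \<in> Tok. w i = u}"

end

theory Submission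
  imports Defs
begin


lemma exp_bind_nonneg:
  fixes h :: "'b \<Rightarrow> real"
  assumes "\<And>x. 0 \<le> h x" "\<And>x. h x \<le> B"
  shows "measure_pmf.expectation (bind_pmf p q) h =
         measure_pmf.expectation p (\<lambda>x. measure_pmf.expectation (q x) h)"
proof -
  have int: "integrable (measure_pmf r) h" for r :: "'b pmf"
    by (rule measure_pmf.integrable_const_bound[where B=B]) (use assms in auto)
  have nn: "0 \<le> measure_pmf.expectation r h" for r :: "'b pmf"
    by (intro Bochner_Integration.integral_nonneg_AE AE_pmfI assms)
  have bnd: "measure_pmf.expectation r h \<le> B" for r :: "'b pmf"
  proof -
    have "measure_pmf.expectation r h \<le> measure_pmf.expectation r (\<lambda>_. B)"
      by (intro integral_mono int) (use assms in auto)
    thus ?thesis by simp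
  qed
  have int2: "integrable (measure_pmf p) (\<lambda>x. measure_pmf.expectation (q x) h)"
    by (rule measure_pmf.integrable_const_bound[where B=B]) (use nn bnd in auto)
  have "ennreal (measure_pmf.expectation (bind_pmf p q) h) = (\<integral>\<^sup>+x. h x \<partial>bind_pmf p q)"
    by (intro nn_integral_eq_integral[symmetric] int AE_pmfI assms)
  also have "\<dots> = (\<integral>\<^sup>+x. \<integral>\<^sup>+y. h y \<partial>q x \<partial>p)" by simp
  also have "\<dots> = (\<integral>\<^sup>+x. ennreal (measure_pmf.expectation (q x) h) \<partial>p)"
    by (intro nn_integral_cong nn_integral_eq_integral int AE_pmfI assms)
  also have "\<dots> = ennreal (measure_pmf.expectation p (\<lambda>x. measure_pmf.expectation (q x) h))"
    by (intro nn_integral_eq_integral int2 AE_pmfI nn)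
  finally show ?thesis
    by (subst (asm) ennreal_inj) (auto intro!: nn Bochner_Integration.integral_nonneg_AE AE_pmfI)
qed



definition dm :: "('v \<times> 'v) set \<Rightarrow> bool" where
  "dm M \<longleftrightarrow> finite M \<and> (\<forall>e\<in>M. \<forall>e'\<in>M. e \<noteq> e' \<longrightarrow> {fst e, snd e} \<inter> {fst e', snd e'} = {})"

definition avg :: "('v \<times> 'v) set \<Rightarrow> ('v \<Rightarrow> real) \<Rightarrow> 'v \<Rightarrow> real" where
  "avg M f v =
     (if \<exists>e\<in>M. v = fst e \<or> v = snd e then
        (let e = (SOME e. e \<in> M \<and> (v = fst e \<or> v = snd e))
         in (f (fst e) + f (snd e)) / 2)
      else f v)"

definition TT :: "'t set \<Rightarrow> ('t \<Rightarrow> 'v) \<Rightarrow> 'v \<times> 'v \<Rightarrow> 't set" where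
  "TT Tok w e = {i \<in> Tok. w i = fst e \<or> w i = snd e}"

definition UU :: "'t set \<Rightarrow> ('t \<Rightarrow> 'v) \<Rightarrow> ('v \<times> 'v) set \<Rightarrow> 't set" where
  "UU Tok w M = {i \<in> Tok. \<not> (\<exists>e\<in>M. w i = fst e \<or> w i = snd e)}"

lemma is_matching_dm: "is_matching V E M \<Longrightarrow> dm M"
  unfolding is_matching_def dm_def by blast

lemma some_edge:
  assumes "dm M" "e \<in> M" "v = fst e \<or> v = snd e"
  shows "(SOME e. e \<in> M \<and> (v = fst e \<or> v = snd e)) = e"
proof (rule some_equality)
  show "e \<in> M \<and> (v = fst e \<or> v = snd e)" using assms by blast
  fix e' assume "e' \<in> M \<and> (v = fst e' \<or> v = snd e')"
  then show "e' = e" using assms unfolding dm_def by blast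
qed

lemma new_pos_T:
  assumes "dm M" "e \<in> M" "i \<in> TT Tok w e"
  shows "new_pos M w C i = (if i \<in> C e then fst e else snd e)"
proof -
  have h: "w i = fst e \<or> w i = snd e" using assms(3) unfolding TT_def by auto
  show ?thesis unfolding new_pos_def using some_edge[OF assms(1,2) h] assms(2) h
    by (auto simp: Let_def)
qed

lemma new_pos_U:
  assumes "i \<in> UU Tok w M"
  shows "new_pos M w C i = w i"
  using assms unfolding new_pos_def UU_def by auto

lemma avg_T:
  assumes "dm M" "e \<in> M" "i \<in> TT Tok w e"
  shows "avg M f (w i) = (f (fst e) + f (snd e)) / 2"
proof -
  have h: "w i = fst e \<or> w i = snd e" using assms(3) unfolding TT_def by auto
  show ?thesis unfolding avg_def using some_edge[OF assms(1,2) h] assms(2) h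
    by (auto simp: Let_def)
qed

lemma avg_U:
  assumes "i \<in> UU Tok w M"
  shows "avg M f (w i) = f (w i)"
  using assms unfolding avg_def UU_def by auto

lemma decomp:
  assumes "dm M" "finite Tok"
  shows "Tok = (\<Union>e\<in>M. TT Tok w e) \<union> UU Tok w M"
    and "(\<Union>e\<in>M. TT Tok w e) \<inter> UU Tok w M = {}"
    and "\<forall>e\<in>M. \<forall>e'\<in>M. e \<noteq> e' \<longrightarrow> TT Tok w e \<inter> TT Tok w e' = {}"
proof -
  show "Tok = (\<Union>e\<in>M. TT Tok w e) \<union> UU Tok w M" unfolding TT_def UU_def by blast
  show "(\<Union>e\<in>M. TT Tok w e) \<inter> UU Tok w M = {}" unfolding TT_def UU_def by blast
  show "\<forall>e\<in>M. \<forall>e'\<in>M. e \<noteq> e' \<longrightarrow> TT Tok w e \<inter> TT Tok w e' = {}"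
    using assms(1) unfolding TT_def dm_def by blast
qed

lemma prod_decomp:
  fixes h :: "'t \<Rightarrow> real"
  assumes "dm M" "finite Tok"
  shows "(\<Prod>i\<in>Tok. h i) = (\<Prod>e\<in>M. \<Prod>i\<in>TT Tok w e. h i) * (\<Prod>i\<in>UU Tok w M. h i)"
proof -
  have fM: "finite M" using assms(1) unfolding dm_def by auto
  have fT: "finite (TT Tok w e)" for e using assms(2) unfolding TT_def by auto
  have fU: "finite (UU Tok w M)" using assms(2) unfolding UU_def by auto
  have "(\<Prod>i\<in>Tok. h i) = (\<Prod>i\<in>(\<Union>e\<in>M. TT Tok w e) \<union> UU Tok w M. h i)"
    using decomp(1)[OF assms, of w] by simp
  also have "\<dots> = (\<Prod>i\<in>(\<Union>e\<in>M. TT Tok w e). h i) * (\<Prod>i\<in>UU Tok w M. h i)"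
    by (rule prod.union_disjoint) (use fM fT fU decomp(2)[OF assms, of w] in auto)
  also have "(\<Prod>i\<in>(\<Union>e\<in>M. TT Tok w e). h i) = (\<Prod>e\<in>M. \<Prod>i\<in>TT Tok w e. h i)"
    by (rule prod.UNION_disjoint) (use fM fT decomp(3)[OF assms, of w] in auto)
  finally show ?thesis .
qed

lemma sum_decomp:
  fixes h :: "'t \<Rightarrow> real"
  assumes "dm M" "finite Tok"
  shows "(\<Sum>i\<in>Tok. h i) = (\<Sum>e\<in>M. \<Sum>i\<in>TT Tok w e. h i) + (\<Sum>i\<in>UU Tok w M. h i)"
proof -
  have fM: "finite M" using assms(1) unfolding dm_def by auto
  have fT: "finite (TT Tok w e)" for e using assms(2) unfolding TT_def by auto
  have fU: "finite (UU Tok w M)" using assms(2) unfolding UU_def by auto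
  have "(\<Sum>i\<in>Tok. h i) = (\<Sum>i\<in>(\<Union>e\<in>M. TT Tok w e) \<union> UU Tok w M. h i)"
    using decomp(1)[OF assms, of w] by simp
  also have "\<dots> = (\<Sum>i\<in>(\<Union>e\<in>M. TT Tok w e). h i) + (\<Sum>i\<in>UU Tok w M. h i)"
    by (rule sum.union_disjoint) (use fM fT fU decomp(2)[OF assms, of w] in auto)
  also have "(\<Sum>i\<in>(\<Union>e\<in>M. TT Tok w e). h i) = (\<Sum>e\<in>M. \<Sum>i\<in>TT Tok w e. h i)"
    by (rule sum.UNION_disjoint) (use fM fT decomp(3)[OF assms, of w] in auto)
  finally show ?thesis .
qed

lemma edge_exp:
  fixes F :: "'t set \<Rightarrow> real"
  assumes "finite Tok" "\<And>A. 0 \<le> F A" "\<And>A. F A \<le> B"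
    and "\<And>A. A \<subseteq> TT Tok w e \<Longrightarrow> F A = \<phi> (card A)"
  shows "measure_pmf.expectation (edge_draw Tok w e) F =
     (\<phi> ((card (TT Tok w e) + 1) div 2) + \<phi> (card (TT Tok w e) div 2)) / 2"
proof -
  let ?S = "TT Tok w e"
  have fS: "finite ?S" using assms(1) unfolding TT_def by auto
  have c: "measure_pmf.expectation (pmf_of_set {A. A \<subseteq> ?S \<and> card A = k}) F = \<phi> k"
    if hk: "k \<le> card ?S" for k
  proof -
    obtain A0 where A0: "A0 \<subseteq> ?S" "card A0 = k" using obtain_subset_with_card_n[OF hk] by blast
    have ne: "{A. A \<subseteq> ?S \<and> card A = k} \<noteq> {}" using A0 by auto
    have fin: "finite {A. A \<subseteq> ?S \<and> card A = k}"
      by (rule finite_subset[of _ "Pow ?S"]) (use fS in auto)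
    have "measure_pmf.expectation (pmf_of_set {A. A \<subseteq> ?S \<and> card A = k}) F =
          measure_pmf.expectation (pmf_of_set {A. A \<subseteq> ?S \<and> card A = k}) (\<lambda>_. \<phi> k)"
      by (intro integral_cong_AE AE_pmfI) (use ne fin assms(4) in auto)
    thus ?thesis by simp
  qed
  have ed: "edge_draw Tok w e = bind_pmf (bernoulli_pmf (1/2)) (\<lambda>b.
       pmf_of_set {A. A \<subseteq> ?S \<and> card A = (if b then (card ?S + 1) div 2 else card ?S div 2)})"
    unfolding edge_draw_def TT_def by (simp add: Let_def)
  show ?thesis
    unfolding ed
    apply (subst exp_bind_nonneg[where B=B])
    using assms(2,3) apply auto[2]
    apply (simp add: c)
    done
qed



lemma amgm_edge:
  fixes a b :: real
  assumes "0 \<le> a" "0 \<le> b"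
  shows "(a ^ ((N+1) div 2) * b ^ (N - (N+1) div 2) + a ^ (N div 2) * b ^ (N - N div 2)) / 2
         \<le> ((a + b) / 2) ^ N"
proof -
  have ab: "a * b \<le> ((a + b) / 2)^2"
  proof -
    have "0 \<le> (a - b)^2" by simp
    thus ?thesis by (simp add: power2_eq_square field_simps)
  qed
  have ab0: "0 \<le> a * b" using assms by simp
  have pm: "(a*b)^m \<le> ((a + b) / 2) ^ (2*m)" for m
    using power_mono[OF ab ab0, of m] by (simp add: power_mult)
  have "N = 2*(N div 2) \<or> N = 2*(N div 2)+1" by presburger
  then obtain m where "N = 2*m \<or> N = 2*m+1" by blast
  then show ?thesis
  proof
    assume N: "N = 2*m"
    have "(N+1) div 2 = m" "N div 2 = m" "N - m = m" using N by auto
    then have "(a ^ ((N+1) div 2) * b ^ (N - (N+1) div 2) + a ^ (N div 2) * b ^ (N - N div 2)) / 2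
      = (a*b)^m" by (simp add: power_mult_distrib)
    also have "\<dots> \<le> ((a + b) / 2) ^ N" using pm N by simp
    finally show ?thesis .
  next
    assume N: "N = 2*m+1"
    have "(N+1) div 2 = m+1" "N div 2 = m" "N - (m+1) = m" "N - m = m+1" using N by auto
    then have "(a ^ ((N+1) div 2) * b ^ (N - (N+1) div 2) + a ^ (N div 2) * b ^ (N - N div 2)) / 2
      = (a*b)^m * ((a+b)/2)" by (simp add: power_mult_distrib field_simps)
    also have "\<dots> \<le> ((a + b) / 2) ^ (2*m) * ((a+b)/2)"
      by (rule mult_right_mono[OF pm]) (use assms in simp)
    also have "\<dots> = ((a + b) / 2) ^ N" using N by simp
    finally show ?thesis .
  qed
qed

lemma int_bound:
  fixes h :: "'a \<Rightarrow> real"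
  assumes "\<And>x. \<bar>h x\<bar> \<le> B"
  shows "integrable (measure_pmf p) h"
  by (rule measure_pmf.integrable_const_bound[where B=B]) (use assms in auto)

lemma prod_bound:
  fixes f :: "'a \<Rightarrow> real"
  assumes "\<And>v. 0 \<le> f v" "\<And>v. f v \<le> B"
  shows "0 \<le> (\<Prod>i\<in>I. f (g i))" "(\<Prod>i\<in>I. f (g i)) \<le> B ^ card I"
proof -
  show "0 \<le> (\<Prod>i\<in>I. f (g i))" using assms by (simp add: prod_nonneg)
  have "(\<Prod>i\<in>I. f (g i)) \<le> (\<Prod>i\<in>I. B)"
    by (rule prod_mono) (use assms in auto)
  thus "(\<Prod>i\<in>I. f (g i)) \<le> B ^ card I" by simp
qed

lemma edge_prod_form:
  fixes f :: "'v \<Rightarrow> real"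
  assumes "finite T" "A \<subseteq> T"
  shows "(\<Prod>i\<in>T. f (if i \<in> A then u else v)) = f u ^ card A * f v ^ (card T - card A)"
proof -
  have "(\<Prod>i\<in>T. f (if i \<in> A then u else v)) = (\<Prod>i\<in>T. if i \<in> A then f u else f v)"
    by (intro prod.cong) auto
  also have "\<dots> = (\<Prod>i\<in>T \<inter> {x. x \<in> A}. f u) * (\<Prod>i\<in>T \<inter> - {x. x \<in> A}. f v)"
    by (rule prod.If_cases) (rule assms)
  also have "T \<inter> {x. x \<in> A} = A" using assms by auto
  also have "T \<inter> - {x. x \<in> A} = T - A" by auto
  finally show ?thesis using assms by (simp add: card_Diff_subset finite_subset)
qed

lemma edge_sum_form:
  fixes g :: "'v \<Rightarrow> real"
  assumes "finite T" "A \<subseteq> T"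
  shows "(\<Sum>i\<in>T. g (if i \<in> A then u else v)) = real (card A) * g u + real (card T - card A) * g v"
proof -
  have "(\<Sum>i\<in>T. g (if i \<in> A then u else v)) = (\<Sum>i\<in>T. if i \<in> A then g u else g v)"
    by (intro sum.cong) auto
  also have "\<dots> = (\<Sum>i\<in>T \<inter> {x. x \<in> A}. g u) + (\<Sum>i\<in>T \<inter> - {x. x \<in> A}. g v)"
    by (rule sum.If_cases) (rule assms)
  also have "T \<inter> {x. x \<in> A} = A" using assms by auto
  also have "T \<inter> - {x. x \<in> A} = T - A" by auto
  finally show ?thesis using assms by (simp add: card_Diff_subset finite_subset)
qed

lemma round_prod:
  fixes f :: "'v \<Rightarrow> real"
  assumes "dm M" "finite Tok" "\<And>v. 0 \<le> f v" "\<And>v. f v \<le> B"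
  shows "measure_pmf.expectation (round_step Tok M w) (\<lambda>w'. \<Prod>i\<in>Tok. f (w' i))
         \<le> (\<Prod>i\<in>Tok. avg M f (w i))"
proof -
  have fM: "finite M" using assms(1) unfolding dm_def by auto
  have fT: "finite (TT Tok w e)" for e using assms(2) unfolding TT_def by auto
  define G where "G e A = (\<Prod>i\<in>TT Tok w e. f (if i \<in> A then fst e else snd e))" for e A
  define K where "K = (\<Prod>i\<in>UU Tok w M. f (w i))"
  have K0: "0 \<le> K" unfolding K_def using assms(3) by (simp add: prod_nonneg)
  have G0: "0 \<le> G e A" for e A unfolding G_def using assms(3) by (simp add: prod_nonneg)
  have GB: "G e A \<le> B ^ card (TT Tok w e)" for e A
    unfolding G_def using prod_bound(2)[of f B "\<lambda>i. if i \<in> A then fst e else snd e", OF assms(3,4)]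
    by simp
  have eq: "(\<Prod>i\<in>Tok. f (new_pos M w C i)) = (\<Prod>e\<in>M. G e (C e)) * K" for C
  proof -
    have "(\<Prod>i\<in>Tok. f (new_pos M w C i)) = (\<Prod>e\<in>M. \<Prod>i\<in>TT Tok w e. f (new_pos M w C i)) *
           (\<Prod>i\<in>UU Tok w M. f (new_pos M w C i))" by (rule prod_decomp[OF assms(1,2)])
    also have "(\<Prod>e\<in>M. \<Prod>i\<in>TT Tok w e. f (new_pos M w C i)) = (\<Prod>e\<in>M. G e (C e))"
      unfolding G_def by (intro prod.cong refl) (simp add: new_pos_T[OF assms(1)])
    also have "(\<Prod>i\<in>UU Tok w M. f (new_pos M w C i)) = K"
      unfolding K_def by (intro prod.cong refl) (simp add: new_pos_U)
    finally show ?thesis .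
  qed
  have edge: "measure_pmf.expectation (edge_draw Tok w e) (G e) \<le> (\<Prod>i\<in>TT Tok w e. avg M f (w i))"
    if e: "e \<in> M" for e
  proof -
    let ?N = "card (TT Tok w e)"
    have "measure_pmf.expectation (edge_draw Tok w e) (G e) =
      ((f (fst e) ^ ((?N+1) div 2) * f (snd e) ^ (?N - (?N+1) div 2)) +
       (f (fst e) ^ (?N div 2) * f (snd e) ^ (?N - ?N div 2))) / 2"
      by (rule edge_exp[where B="B ^ ?N"]) (use assms(2) G0 GB fT in \<open>auto simp: G_def edge_prod_form\<close>)
    also have "\<dots> \<le> ((f (fst e) + f (snd e)) / 2) ^ ?N"
      by (rule amgm_edge) (use assms(3) in auto)
    also have "\<dots> = (\<Prod>i\<in>TT Tok w e. avg M f (w i))"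
      by (simp add: avg_T[OF assms(1) e])
    finally show ?thesis .
  qed
  have "measure_pmf.expectation (round_step Tok M w) (\<lambda>w'. \<Prod>i\<in>Tok. f (w' i))
     = measure_pmf.expectation (Pi_pmf M {} (edge_draw Tok w)) (\<lambda>C. (\<Prod>e\<in>M. G e (C e)) * K)"
    unfolding round_step_def by (simp add: eq)
  also have "\<dots> = measure_pmf.expectation (Pi_pmf M {} (edge_draw Tok w)) (\<lambda>C. \<Prod>e\<in>M. G e (C e)) * K"
    by simp
  also have "measure_pmf.expectation (Pi_pmf M {} (edge_draw Tok w)) (\<lambda>C. \<Prod>e\<in>M. G e (C e))
      = (\<Prod>e\<in>M. measure_pmf.expectation (edge_draw Tok w e) (G e))"
  proof (rule expectation_prod_Pi_pmf[OF fM])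
    fix e assume "e \<in> M"
    show "integrable (measure_pmf (edge_draw Tok w e)) (G e)"
      by (rule int_bound[where B="B ^ card (TT Tok w e)"]) (use G0 GB in \<open>simp add: abs_of_nonneg\<close>)
  qed (use G0 in auto)
  also have "(\<Prod>e\<in>M. measure_pmf.expectation (edge_draw Tok w e) (G e)) * K
     \<le> (\<Prod>e\<in>M. \<Prod>i\<in>TT Tok w e. avg M f (w i)) * K"
    by (intro mult_right_mono prod_mono K0 conjI edge Bochner_Integration.integral_nonneg_AE AE_pmfI G0)
  also have "\<dots> = (\<Prod>i\<in>Tok. avg M f (w i))"
    by (subst prod_decomp[OF assms(1,2), of _ w]) (simp add: K_def avg_U)
  finally show ?thesis .
qed

lemma round_sum:
  fixes g :: "'v \<Rightarrow> real"
  assumes "dm M" "finite Tok" "\<And>v. 0 \<le> g v" "\<And>v. g v \<le> B"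
  shows "measure_pmf.expectation (round_step Tok M w) (\<lambda>w'. \<Sum>i\<in>Tok. g (w' i))
         = (\<Sum>i\<in>Tok. avg M g (w i))"
proof -
  have fM: "finite M" using assms(1) unfolding dm_def by auto
  have fT: "finite (TT Tok w e)" for e using assms(2) unfolding TT_def by auto
  define H where "H e A = (\<Sum>i\<in>TT Tok w e. g (if i \<in> A then fst e else snd e))" for e A
  define K where "K = (\<Sum>i\<in>UU Tok w M. g (w i))"
  have H0: "0 \<le> H e A" for e A unfolding H_def using assms(3) by (simp add: sum_nonneg)
  have HB: "H e A \<le> real (card (TT Tok w e)) * B" for e A
  proof -
    have "H e A \<le> (\<Sum>i\<in>TT Tok w e. B)" unfolding H_def by (rule sum_mono) (use assms(4) in auto)
    thus ?thesis by simp
  qed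
  have intH: "integrable (measure_pmf p) (H e)" for e p
    by (rule int_bound[where B="real (card (TT Tok w e)) * B"]) (use H0 HB in \<open>simp add: abs_of_nonneg\<close>)
  have intH2: "integrable (measure_pmf p) (\<lambda>C. H e (C e))" for e p
    by (rule int_bound[where B="real (card (TT Tok w e)) * B"]) (use H0 HB in \<open>simp add: abs_of_nonneg\<close>)
  have eq: "(\<Sum>i\<in>Tok. g (new_pos M w C i)) = (\<Sum>e\<in>M. H e (C e)) + K" for C
  proof -
    have "(\<Sum>i\<in>Tok. g (new_pos M w C i)) = (\<Sum>e\<in>M. \<Sum>i\<in>TT Tok w e. g (new_pos M w C i)) +
           (\<Sum>i\<in>UU Tok w M. g (new_pos M w C i))" by (rule sum_decomp[OF assms(1,2)])
    also have "(\<Sum>e\<in>M. \<Sum>i\<in>TT Tok w e. g (new_pos M w C i)) = (\<Sum>e\<in>M. H e (C e))"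
      unfolding H_def by (intro sum.cong refl) (simp add: new_pos_T[OF assms(1)])
    also have "(\<Sum>i\<in>UU Tok w M. g (new_pos M w C i)) = K"
      unfolding K_def by (intro sum.cong refl) (simp add: new_pos_U)
    finally show ?thesis .
  qed
  have edge: "measure_pmf.expectation (edge_draw Tok w e) (H e) = (\<Sum>i\<in>TT Tok w e. avg M g (w i))"
    if e: "e \<in> M" for e
  proof -
    let ?N = "card (TT Tok w e)"
    have "measure_pmf.expectation (edge_draw Tok w e) (H e) =
      ((real ((?N+1) div 2) * g (fst e) + real (?N - (?N+1) div 2) * g (snd e)) +
       (real (?N div 2) * g (fst e) + real (?N - ?N div 2) * g (snd e))) / 2"
      by (rule edge_exp[where B="real ?N * B"]) (use assms(2) H0 HB fT in \<open>auto simp: H_def edge_sum_form\<close>)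
    also have "\<dots> = real ?N * ((g (fst e) + g (snd e)) / 2)"
    proof -
      have h1: "?N - (?N+1) div 2 = ?N div 2" and h2: "?N - ?N div 2 = (?N+1) div 2"
        and h0: "(?N+1) div 2 + ?N div 2 = ?N" by presburger+
      have h3: "real ((?N+1) div 2) + real (?N div 2) = real ?N"
        using h0 by (metis of_nat_add)
      have "((real ((?N+1) div 2) * g (fst e) + real (?N - (?N+1) div 2) * g (snd e)) +
       (real (?N div 2) * g (fst e) + real (?N - ?N div 2) * g (snd e))) / 2
        = (real ((?N+1) div 2) + real (?N div 2)) * ((g (fst e) + g (snd e)) / 2)"
        unfolding h1 h2 by (simp add: algebra_simps add_divide_distrib)
      then show ?thesis unfolding h3 .
    qed
    also have "\<dots> = (\<Sum>i\<in>TT Tok w e. avg M g (w i))"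
      by (simp add: avg_T[OF assms(1) e])
    finally show ?thesis .
  qed
  have "measure_pmf.expectation (round_step Tok M w) (\<lambda>w'. \<Sum>i\<in>Tok. g (w' i))
     = measure_pmf.expectation (Pi_pmf M {} (edge_draw Tok w)) (\<lambda>C. (\<Sum>e\<in>M. H e (C e)) + K)"
    unfolding round_step_def by (simp add: eq)
  also have "\<dots> = measure_pmf.expectation (Pi_pmf M {} (edge_draw Tok w)) (\<lambda>C. \<Sum>e\<in>M. H e (C e)) + K"
    by (subst Bochner_Integration.integral_add)
       (auto intro!: Bochner_Integration.integrable_sum intH2)
  also have "measure_pmf.expectation (Pi_pmf M {} (edge_draw Tok w)) (\<lambda>C. \<Sum>e\<in>M. H e (C e))
      = (\<Sum>e\<in>M. measure_pmf.expectation (Pi_pmf M {} (edge_draw Tok w)) (\<lambda>C. H e (C e)))"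
    by (rule Bochner_Integration.integral_sum)
       (auto intro: intH2)
  also have "\<dots> = (\<Sum>e\<in>M. measure_pmf.expectation (edge_draw Tok w e) (H e))"
  proof (intro sum.cong refl)
    fix e assume e: "e \<in> M"
    have "measure_pmf.expectation (Pi_pmf M {} (edge_draw Tok w)) (\<lambda>C. H e (C e))
       = measure_pmf.expectation (map_pmf (\<lambda>C. C e) (Pi_pmf M {} (edge_draw Tok w))) (H e)"
      by simp
    also have "map_pmf (\<lambda>C. C e) (Pi_pmf M {} (edge_draw Tok w)) = edge_draw Tok w e"
      using Pi_pmf_component[OF fM, of e "{}" "edge_draw Tok w"] e by simp
    finally show "measure_pmf.expectation (Pi_pmf M {} (edge_draw Tok w)) (\<lambda>C. H e (C e))
       = measure_pmf.expectation (edge_draw Tok w e) (H e)" .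
  qed
  also have "(\<Sum>e\<in>M. measure_pmf.expectation (edge_draw Tok w e) (H e)) + K
     = (\<Sum>e\<in>M. \<Sum>i\<in>TT Tok w e. avg M g (w i)) + K"
    by (simp add: edge)
  also have "\<dots> = (\<Sum>i\<in>Tok. avg M g (w i))"
    by (subst sum_decomp[OF assms(1,2), of _ w]) (simp add: K_def avg_U)
  finally show ?thesis .
qed

fun Qf :: "(nat \<Rightarrow> ('v \<times> 'v) set) \<Rightarrow> nat \<Rightarrow> nat \<Rightarrow> ('v \<Rightarrow> real) \<Rightarrow> 'v \<Rightarrow> real" where
  "Qf Ms t1 0 f = f"
| "Qf Ms t1 (Suc n) f = Qf Ms t1 n (avg (Ms (t1 + Suc n)) f)"

lemma avg_bounds:
  assumes "\<And>v. 0 \<le> f v" "\<And>v. f v \<le> B"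
  shows "0 \<le> avg M f v" "avg M f v \<le> B"
  unfolding avg_def Let_def using assms by (auto simp: add_nonneg_nonneg) (smt (verit) assms)+

lemma avg_lin: "avg M (\<lambda>v. a + c * g v) = (\<lambda>v. a + c * avg M g v)"
  unfolding avg_def Let_def by (auto simp: fun_eq_iff field_simps)

lemma Qf_lin: "Qf Ms t1 n (\<lambda>v. a + c * g v) = (\<lambda>v. a + c * Qf Ms t1 n g v)"
  by (induction n arbitrary: g) (simp_all add: avg_lin)

lemma run_prod:
  fixes f :: "'v \<Rightarrow> real"
  assumes "finite Tok" "\<forall>k. 0 < k \<and> k \<le> n \<longrightarrow> dm (Ms (t1 + k))"
    and "\<And>v. 0 \<le> f v" "\<And>v. f v \<le> B"
  shows "measure_pmf.expectation (run Tok Ms t1 w0 n) (\<lambda>w. \<Prod>i\<in>Tok. f (w i))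
         \<le> (\<Prod>i\<in>Tok. Qf Ms t1 n f (w0 i))"
  using assms(2,3,4)
proof (induction n arbitrary: f)
  case 0
  then show ?case by simp
next
  case (Suc n)
  let ?M = "Ms (t1 + Suc n)"
  have dmM: "dm ?M" using Suc.prems(1) by auto
  have pb: "0 \<le> (\<Prod>i\<in>Tok. f (w i))" "(\<Prod>i\<in>Tok. f (w i)) \<le> B ^ card Tok" for w
    using prod_bound[where f=f and B=B and I=Tok and g=w] Suc.prems(2,3) by blast+
  have "measure_pmf.expectation (run Tok Ms t1 w0 (Suc n)) (\<lambda>w. \<Prod>i\<in>Tok. f (w i))
     = measure_pmf.expectation (run Tok Ms t1 w0 n)
         (\<lambda>w. measure_pmf.expectation (round_step Tok ?M w) (\<lambda>w. \<Prod>i\<in>Tok. f (w i)))"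
    by (simp only: run.simps, rule exp_bind_nonneg[where B="B ^ card Tok"])
       (use pb in auto)
  also have "\<dots> \<le> measure_pmf.expectation (run Tok Ms t1 w0 n) (\<lambda>w. \<Prod>i\<in>Tok. avg ?M f (w i))"
  proof (rule integral_mono)
    show "integrable (measure_pmf (run Tok Ms t1 w0 n))
         (\<lambda>w. measure_pmf.expectation (round_step Tok ?M w) (\<lambda>w. \<Prod>i\<in>Tok. f (w i)))"
    proof (rule int_bound[where B="B ^ card Tok"])
      fix w
      have i: "integrable (measure_pmf (round_step Tok ?M w)) (\<lambda>w. \<Prod>i\<in>Tok. f (w i))"
        by (rule int_bound[where B="B ^ card Tok"]) (use pb in auto)
      have a: "0 \<le> measure_pmf.expectation (round_step Tok ?M w) (\<lambda>w. \<Prod>i\<in>Tok. f (w i))"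
        by (intro Bochner_Integration.integral_nonneg_AE AE_pmfI pb)
      have "measure_pmf.expectation (round_step Tok ?M w) (\<lambda>w. \<Prod>i\<in>Tok. f (w i))
         \<le> measure_pmf.expectation (round_step Tok ?M w) (\<lambda>_. B ^ card Tok)"
        by (rule integral_mono[OF i]) (use pb in auto)
      then show "\<bar>measure_pmf.expectation (round_step Tok ?M w) (\<lambda>w. \<Prod>i\<in>Tok. f (w i))\<bar> \<le> B ^ card Tok"
        using a by simp
    qed
    show "integrable (measure_pmf (run Tok Ms t1 w0 n)) (\<lambda>w. \<Prod>i\<in>Tok. avg ?M f (w i))"
      by (rule int_bound[where B="B ^ card Tok"])
         (use prod_bound[where f="avg ?M f" and B=B and I=Tok] avg_bounds[where f=f and B=B and M="?M"] Suc.prems(2,3)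
          in \<open>auto simp: abs_of_nonneg\<close>)
    fix w show "measure_pmf.expectation (round_step Tok ?M w) (\<lambda>w. \<Prod>i\<in>Tok. f (w i))
       \<le> (\<Prod>i\<in>Tok. avg ?M f (w i))"
      by (rule round_prod[OF dmM assms(1) Suc.prems(2,3)])
  qed
  also have "\<dots> \<le> (\<Prod>i\<in>Tok. Qf Ms t1 n (avg ?M f) (w0 i))"
    by (rule Suc.IH) (use Suc.prems(1) avg_bounds[OF Suc.prems(2,3)] in auto)
  finally show ?case by simp
qed

lemma run_sum:
  fixes g :: "'v \<Rightarrow> real"
  assumes "finite Tok" "\<forall>k. 0 < k \<and> k \<le> n \<longrightarrow> dm (Ms (t1 + k))"
    and "\<And>v. 0 \<le> g v" "\<And>v. g v \<le> B"
  shows "measure_pmf.expectation (run Tok Ms t1 w0 n) (\<lambda>w. \<Sum>i\<in>Tok. g (w i))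
         = (\<Sum>i\<in>Tok. Qf Ms t1 n g (w0 i))"
  using assms(2,3,4)
proof (induction n arbitrary: g)
  case 0
  then show ?case by simp
next
  case (Suc n)
  let ?M = "Ms (t1 + Suc n)"
  have dmM: "dm ?M" using Suc.prems(1) by auto
  have sb: "0 \<le> (\<Sum>i\<in>Tok. g (w i))" "(\<Sum>i\<in>Tok. g (w i)) \<le> real (card Tok) * B" for w
  proof -
    show "0 \<le> (\<Sum>i\<in>Tok. g (w i))" using Suc.prems(2) by (simp add: sum_nonneg)
    have "(\<Sum>i\<in>Tok. g (w i)) \<le> (\<Sum>i\<in>Tok. B)" by (rule sum_mono) (use Suc.prems(3) in auto)
    thus "(\<Sum>i\<in>Tok. g (w i)) \<le> real (card Tok) * B" by simp
  qed
  have "measure_pmf.expectation (run Tok Ms t1 w0 (Suc n)) (\<lambda>w. \<Sum>i\<in>Tok. g (w i))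
     = measure_pmf.expectation (run Tok Ms t1 w0 n)
         (\<lambda>w. measure_pmf.expectation (round_step Tok ?M w) (\<lambda>w. \<Sum>i\<in>Tok. g (w i)))"
    by (simp only: run.simps, rule exp_bind_nonneg[where B="real (card Tok) * B"]) (use sb in auto)
  also have "\<dots> = measure_pmf.expectation (run Tok Ms t1 w0 n) (\<lambda>w. \<Sum>i\<in>Tok. avg ?M g (w i))"
    by (rule Bochner_Integration.integral_cong[OF refl]) (rule round_sum[OF dmM assms(1) Suc.prems(2,3)])
  also have "\<dots> = (\<Sum>i\<in>Tok. Qf Ms t1 n (avg ?M g) (w0 i))"
    by (rule Suc.IH) (use Suc.prems(1) avg_bounds[OF Suc.prems(2,3)] in auto)
  finally show ?case by simp
qed

lemma Qf_bounds:
  assumes "\<And>v. 0 \<le> f v" "\<And>v. f v \<le> B"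
  shows "0 \<le> Qf Ms t1 n f v \<and> Qf Ms t1 n f v \<le> B"
  using assms
proof (induction n arbitrary: f)
  case 0 then show ?case by simp
next
  case (Suc n)
  have "\<And>v. 0 \<le> avg (Ms (t1 + Suc n)) f v" "\<And>v. avg (Ms (t1 + Suc n)) f v \<le> B"
    using avg_bounds[where f=f and B=B] Suc.prems by blast+
  then show ?case using Suc.IH by simp
qed

lemma card_load:
  assumes "finite D" "finite Tok"
  shows "card {i \<in> Tok. w i \<in> D} = (\<Sum>u\<in>D. load Tok w u)"
proof -
  have "{i \<in> Tok. w i \<in> D} = (\<Union>u\<in>D. {i \<in> Tok. w i = u})" by auto
  then have "card {i \<in> Tok. w i \<in> D} = card (\<Union>u\<in>D. {i \<in> Tok. w i = u})" by simp
  also have "\<dots> = (\<Sum>u\<in>D. card {i \<in> Tok. w i = u})"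
    by (rule card_UN_disjoint) (use assms in auto)
  finally show ?thesis unfolding load_def .
qed

theorem lemma3p3:
  fixes V :: "'v set" and E :: "'v set set" and Tok :: "'t set"
    and Ms :: "nat \<Rightarrow> ('v \<times> 'v) set" and w0 :: "'t \<Rightarrow> 'v"
    and D :: "'v set" and t1 t2 :: nat and \<delta> :: real
  assumes "finite V" and "\<forall>e\<in>E. \<exists>u v. e = {u, v} \<and> u \<noteq> v \<and> u \<in> V \<and> v \<in> V"
    and "finite Tok" and "\<forall>i\<in>Tok. w0 i \<in> V"
    and "\<forall>t. t1 < t \<and> t \<le> t2 \<longrightarrow> is_matching V E (Ms t)"
    and "D \<subseteq> V" and "t1 < t2" and "\<delta> > 0"
  shows "let p = run Tok Ms t1 w0 (t2 - t1);
             Z = (\<lambda>w. real (card {i \<in> Tok. w i \<in> D}));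
             EZ = measure_pmf.expectation p Z
         in Z = (\<lambda>w. real (\<Sum>u\<in>D. load Tok w u)) \<and>
            measure_pmf.prob p {w. Z w \<ge> (1 + \<delta>) * EZ}
              \<le> (exp \<delta> / (1 + \<delta>) powr (1 + \<delta>)) powr EZ"
proof -
  define n where "n = t2 - t1"
  define p where "p = run Tok Ms t1 w0 n"
  define Z where "Z = (\<lambda>w::'t \<Rightarrow> 'v. real (card {i \<in> Tok. w i \<in> D}))"
  define EZ where "EZ = measure_pmf.expectation p Z"
  have fD: "finite D" using assms(1,6) finite_subset by blast
  have dmk: "\<forall>k. 0 < k \<and> k \<le> n \<longrightarrow> dm (Ms (t1 + k))"
  proof (intro allI impI)
    fix k assume k: "0 < k \<and> k \<le> n"
    have "t1 < t1 + k \<and> t1 + k \<le> t2" using k assms(7) unfolding n_def by arith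
    then have "is_matching V E (Ms (t1 + k))" using assms(5) by blast
    then show "dm (Ms (t1 + k))" by (rule is_matching_dm)
  qed
  define ind where "ind = (\<lambda>v. if v \<in> D then 1 else (0::real))"
  define q where "q i = Qf Ms t1 n ind (w0 i)" for i
  have ind01: "\<And>v. 0 \<le> ind v" "\<And>v. ind v \<le> 1" unfolding ind_def by auto
  have q0: "0 \<le> q i" for i unfolding q_def using Qf_bounds[where f=ind and B=1] ind01 by blast
  have Zsum: "Z w = (\<Sum>i\<in>Tok. ind (w i))" for w
  proof -
    have "(\<Sum>i\<in>Tok. ind (w i)) = (\<Sum>i\<in>Tok. if w i \<in> D then 1 else 0)" unfolding ind_def by simp
    also have "\<dots> = real (card {i \<in> Tok. w i \<in> D})"
      using assms(3) by (simp add: sum.If_cases Int_def conj_commute)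
    finally show ?thesis unfolding Z_def by simp
  qed
  have EZq: "EZ = (\<Sum>i\<in>Tok. q i)"
    unfolding EZ_def p_def q_def Zsum
    by (rule run_sum[OF assms(3) dmk ind01])
  have EZ0: "0 \<le> EZ" using EZq q0 by (simp add: sum_nonneg)
  define f where "f v = 1 + \<delta> * ind v" for v
  have f0: "\<And>v. 0 \<le> f v" and fB: "\<And>v. f v \<le> 1 + \<delta>"
    unfolding f_def ind_def using assms(8) by auto
  have fprod: "(\<Prod>i\<in>Tok. f (w i)) = (1 + \<delta>) powr Z w" for w
  proof -
    have "(\<Prod>i\<in>Tok. f (w i)) = (\<Prod>i\<in>Tok. if w i \<in> D then 1 + \<delta> else 1)"
      unfolding f_def ind_def by (intro prod.cong) auto
    also have "\<dots> = (1 + \<delta>) ^ card {i \<in> Tok. w i \<in> D}"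
      using assms(3) by (simp add: prod.If_cases Int_def conj_commute)
    also have "\<dots> = (1 + \<delta>) powr Z w" unfolding Z_def using assms(8) by (simp add: powr_realpow)
    finally show ?thesis .
  qed
  have mgf: "measure_pmf.expectation p (\<lambda>w. (1 + \<delta>) powr Z w) \<le> exp (\<delta> * EZ)"
  proof -
    have "measure_pmf.expectation p (\<lambda>w. (1 + \<delta>) powr Z w) = measure_pmf.expectation p (\<lambda>w. \<Prod>i\<in>Tok. f (w i))"
      by (simp add: fprod)
    also have "\<dots> \<le> (\<Prod>i\<in>Tok. Qf Ms t1 n f (w0 i))"
      unfolding p_def by (rule run_prod[OF assms(3) dmk f0 fB])
    also have "\<dots> = (\<Prod>i\<in>Tok. 1 + \<delta> * q i)"
      unfolding f_def q_def by (simp add: Qf_lin[where a=1 and c=\<delta> and g=ind, unfolded])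
    also have "\<dots> \<le> (\<Prod>i\<in>Tok. exp (\<delta> * q i))"
      by (intro prod_mono conjI) (use q0 assms(8) in \<open>auto simp: exp_ge_add_one_self\<close>)
    also have "\<dots> = exp (\<delta> * EZ)"
      unfolding EZq using assms(3) by (simp add: exp_sum sum_distrib_left)
    finally show ?thesis .
  qed
  define a where "a = (1 + \<delta>) * EZ"
  have markov: "measure_pmf.prob p {w. Z w \<ge> a} * (1 + \<delta>) powr a
      \<le> measure_pmf.expectation p (\<lambda>w. (1 + \<delta>) powr Z w)"
  proof -
    have "measure_pmf.prob p {w. Z w \<ge> a} * (1 + \<delta>) powr a
       = measure_pmf.expectation p (\<lambda>w. indicator {w. Z w \<ge> a} w * (1 + \<delta>) powr a)"
      by simp
    also have "\<dots> \<le> measure_pmf.expectation p (\<lambda>w. (1 + \<delta>) powr Z w)"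
    proof (rule integral_mono)
      show "integrable (measure_pmf p) (\<lambda>w. indicator {w. Z w \<ge> a} w * (1 + \<delta>) powr a)"
        by (rule int_bound[where B="(1 + \<delta>) powr a"]) (simp split: split_indicator)
      show "integrable (measure_pmf p) (\<lambda>w. (1 + \<delta>) powr Z w)"
      proof (rule int_bound[where B="(1 + \<delta>) powr (real (card Tok))"])
        fix w
        have "Z w \<le> real (card Tok)" unfolding Z_def
          by (simp add: card_mono assms(3))
        then have "(1 + \<delta>) powr Z w \<le> (1 + \<delta>) powr (real (card Tok))"
          by (rule powr_mono) (use assms(8) in simp)
        then show "\<bar>(1 + \<delta>) powr Z w\<bar> \<le> (1 + \<delta>) powr (real (card Tok))" by simp
      qed
      fix w show "indicator {w. Z w \<ge> a} w * (1 + \<delta>) powr a \<le> (1 + \<delta>) powr Z w"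
        using assms(8) by (auto split: split_indicator intro: powr_mono)
    qed
    finally show ?thesis .
  qed
  have pos: "0 < (1 + \<delta>) powr a" using assms(8) by simp
  have "measure_pmf.prob p {w. Z w \<ge> a} \<le> exp (\<delta> * EZ) / (1 + \<delta>) powr a"
    using markov mgf pos by (simp add: pos_le_divide_eq)
  also have "\<dots> = (exp \<delta> / (1 + \<delta>) powr (1 + \<delta>)) powr EZ"
    using assms(8) unfolding a_def
    by (simp add: powr_divide powr_powr exp_powr_real mult.commute)
  finally have main: "measure_pmf.prob p {w. Z w \<ge> a} \<le> (exp \<delta> / (1 + \<delta>) powr (1 + \<delta>)) powr EZ" .
  have zl: "Z = (\<lambda>w. real (\<Sum>u\<in>D. load Tok w u))"
    unfolding Z_def using card_load[OF fD assms(3)] by simp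
  show ?thesis
    using zl main unfolding Let_def p_def n_def EZ_def a_def Z_def by simp
qed

end
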